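(* Let $(\Gamma,\rho)$ be a voltage graph with $\Gamma=(V,E)$ a rooted simple digraph on vertices $V=\{v_1,\dots,v_N\}$ and voltage group $G$ a point group in dimension $k$ (a finite subgroup of $\mathrm{O}(k)$). Write $\theta_{ij}:=\rho(e_{ij})$ for $e_{ij}\in E$, and let $a_{ij}>0$ be positive constants. Consider the $G$-clustering dynamics on $p=(x_1,\dots,x_N)\in\mathbb{R}^{kN}$, $x_i\in\mathbb{R}^k$: $$\dot x_i=\sum_{v_j\in\mathcal{N}^-(v_i)}a_{ij}\,(\theta_{ij}x_j-x_i),\qquad i=1,\dots,N.$$ Let $\{G_i\}_{v_i\in V}$ be the local groups and $\{G_i^*\}_{v_i\in V}$ the directed local groups of $(\Gamma,\rho)$. Suppose that $G_i=G_i^*$ for some (and hence any) root $v_i$ of $\Gamma$. Then for any initial condition $p(0)\in\mathbb{R}^{kN}$, the trajectory $p(t)$ converges exponentially fast to a configuration $p^*=(x_1^*,\dots,x_N^* )$ satisfying: (1) for each edge $e_{ij}\in E$, $x_i^*=\theta_{ij}x_j^*$; in particular $\|x_1^*\|=\dots=\|x_N^*\|$; (2) for each $v_i\in V$, $\theta x_i^*=x_i^*$ for all $\theta\in G_i$.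
   Context: Digraphs are simple (no self-loops, no multiple edges); $e_{ij}$ denotes the edge $v_i\to v_j$. $\mathcal{N}^-(v_i)=\{v_j: e_{ij}\in E\}$ is the set of out-neighbors of $v_i$. A voltage graph is a pair $(\Gamma,\rho)$ with $\rho:E\to G$, $G$ a finite group with identity $\mathbf{1}$. A semi-walk is an alternating sequence $w=v_{i_1}a_1v_{i_2}\dots a_{n-1}v_{i_n}$ ($n\ge1$) where each $a_j$ is either $e_{i_ji_{j+1}}$ or $e_{i_{j+1}i_j}$; it goes from $v_{i_1}$ to $v_{i_n}$, is closed if $v_{i_1}=v_{i_n}$, and is a walk if every $a_j=e_{i_ji_{j+1}}$. A path is a walk with pairwise distinct vertices. The net voltage is $f(w)=\bar\rho(a_1)\cdots\bar\rho(a_{n-1})$ with $\bar\rho(a_j)=\rho(a_j)$ if $a_j=e_{i_ji_{j+1}}$ and $\bar\rho(a_j)=\rho(a_j)^{-1}$ otherwise ($f=\mathbf{1}$ for the one-vertex semi-walk). The local group at $v_i$ is $G_i=\{f(w): w$ a closed semi-walk starting and ending at $v_i\}$; the directed local group is $G_i^*=\{f(w): w$ a closed walk starting and ending at $v_i\}$. $\Gamma$ is rooted if there is a vertex $v_r$ (a root) such that every vertex has a path to $v_r$. *)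

theory Defs
  imports "HOL-Analysis.Analysis"
begin

text \<open>Vertices are the elements of a finite type 'v; the edge set is a relation
  E on 'v (a pair (i,j) stands for the edge e_ij : v_i -> v_j), so multiple edges
  are impossible; simplicity additionally requires irreflexivity.\<close>

definition simple_digraph :: "('v \<times> 'v) set \<Rightarrow> bool" where
  "simple_digraph E \<longleftrightarrow> (\<forall>i. (i, i) \<notin> E)"

definition point_group :: "(real^'k^'k) set \<Rightarrow> bool" where
  "point_group G \<longleftrightarrow> finite G \<and> (\<forall>g\<in>G. orthogonal_matrix g) \<and> mat 1 \<in> G
     \<and> (\<forall>g\<in>G. \<forall>h\<in>G. g ** h \<in> G) \<and> (\<forall>g\<in>G. matrix_inv g \<in> G)"

definition voltage_graph :: "('v \<times> 'v) set \<Rightarrow> (real^'k^'k) set \<Rightarrow> ('v \<times> 'v \<Rightarrow> real^'k^'k) \<Rightarrow> bool" where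
  "voltage_graph E G \<rho> \<longleftrightarrow> simple_digraph E \<and> point_group G \<and> (\<forall>e\<in>E. \<rho> e \<in> G)"

inductive semiwalk_volt :: "('v \<times> 'v) set \<Rightarrow> ('v \<times> 'v \<Rightarrow> real^'k^'k) \<Rightarrow> 'v \<Rightarrow> 'v \<Rightarrow> real^'k^'k \<Rightarrow> bool"
  for E \<rho> where
  sw_nil: "semiwalk_volt E \<rho> i i (mat 1)"
| sw_fwd: "semiwalk_volt E \<rho> i j g \<Longrightarrow> (j, l) \<in> E \<Longrightarrow> semiwalk_volt E \<rho> i l (g ** \<rho> (j, l))"
| sw_bwd: "semiwalk_volt E \<rho> i j g \<Longrightarrow> (l, j) \<in> E \<Longrightarrow> semiwalk_volt E \<rho> i l (g ** matrix_inv (\<rho> (l, j)))"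

inductive walk_volt :: "('v \<times> 'v) set \<Rightarrow> ('v \<times> 'v \<Rightarrow> real^'k^'k) \<Rightarrow> 'v \<Rightarrow> 'v \<Rightarrow> real^'k^'k \<Rightarrow> bool"
  for E \<rho> where
  w_nil: "walk_volt E \<rho> i i (mat 1)"
| w_fwd: "walk_volt E \<rho> i j g \<Longrightarrow> (j, l) \<in> E \<Longrightarrow> walk_volt E \<rho> i l (g ** \<rho> (j, l))"

definition local_group :: "('v \<times> 'v) set \<Rightarrow> ('v \<times> 'v \<Rightarrow> real^'k^'k) \<Rightarrow> 'v \<Rightarrow> (real^'k^'k) set" where
  "local_group E \<rho> i = {g. semiwalk_volt E \<rho> i i g}"

definition dir_local_group :: "('v \<times> 'v) set \<Rightarrow> ('v \<times> 'v \<Rightarrow> real^'k^'k) \<Rightarrow> 'v \<Rightarrow> (real^'k^'k) set" where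
  "dir_local_group E \<rho> i = {g. walk_volt E \<rho> i i g}"

definition has_path :: "('v \<times> 'v) set \<Rightarrow> 'v \<Rightarrow> 'v \<Rightarrow> bool" where
  "has_path E u w \<longleftrightarrow> (\<exists>vs. vs \<noteq> [] \<and> distinct vs \<and> hd vs = u \<and> last vs = w
      \<and> (\<forall>n. Suc n < length vs \<longrightarrow> (vs ! n, vs ! Suc n) \<in> E))"

definition is_root :: "('v \<times> 'v) set \<Rightarrow> 'v \<Rightarrow> bool" where
  "is_root E r \<longleftrightarrow> (\<forall>v. has_path E v r)"

definition rooted :: "('v \<times> 'v) set \<Rightarrow> bool" where
  "rooted E \<longleftrightarrow> (\<exists>r. is_root E r)"

definition clustering_field :: "('v \<times> 'v) set \<Rightarrow> ('v \<times> 'v \<Rightarrow> real^'k^'k) \<Rightarrow> ('v \<Rightarrow> 'v \<Rightarrow> real)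
     \<Rightarrow> (real^'k)^'v \<Rightarrow> (real^'k)^'v" where
  "clustering_field E \<rho> a p = (\<chi> i. \<Sum>j\<in>{j. (i, j) \<in> E}. a i j *\<^sub>R (\<rho> (i, j) *v (p $ j) - p $ i))"

end

theory Submission
  imports Defs
begin

lemma at0_interior: "t > 0 \<Longrightarrow> at t within {0::real..} = at t"
  by (rule at_within_interior) simp

lemma mono_deriv:
  fixes h h' :: "real \<Rightarrow> real"
  assumes d: "\<And>t. t \<ge> 0 \<Longrightarrow> (h has_real_derivative h' t) (at t within {0..})"
    and nn: "\<And>t. t0 \<le> t \<Longrightarrow> t \<le> t1 \<Longrightarrow> h' t \<ge> 0" and t0: "0 \<le> t0" "t0 \<le> t1"
  shows "h t0 \<le> h t1"
proof (cases "t0 = t1")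
  case True then show ?thesis by simp
next
  case False
  then have lt: "t0 < t1" using t0 by simp
  have "continuous_on {0..} h"
    unfolding continuous_on_eq_continuous_within using d DERIV_continuous by (metis atLeast_iff)
  then have c: "continuous_on {t0..t1} h"
    by (rule continuous_on_subset) (use t0 in auto)
  have dd: "\<And>x. t0 < x \<Longrightarrow> x < t1 \<Longrightarrow> (h has_real_derivative h' x) (at x)"
  proof -
    fix x assume "t0 < x" "x < t1"
    then have "x > 0" using t0 by simp
    then show "(h has_real_derivative h' x) (at x)" using d[of x] at0_interior[of x] by simp
  qed
  obtain l z where z: "t0 < z" "z < t1" "DERIV h z :> l" "h t1 - h t0 = (t1 - t0) * l"
    using MVT[OF lt c] dd real_differentiable_def by blast
  have "l = h' z" using z dd DERIV_unique by blast
  then have "l \<ge> 0" using nn z by simp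
  then have "(t1 - t0) * l \<ge> 0" using lt by simp
  then show ?thesis using z by linarith
qed

lemma pos2_deriv: "((\<lambda>x::real. (max 0 x)\<^sup>2) has_real_derivative 2 * max 0 x) (at x)"
proof -
  consider "x > 0" | "x < 0" | "x = 0" by linarith
  then show ?thesis
  proof cases
    case 1
    have "((\<lambda>x::real. x\<^sup>2) has_real_derivative 2 * max 0 x) (at x)"
      using 1 by (auto intro!: derivative_eq_intros)
    then show ?thesis
      by (rule has_field_derivative_transform_within_open[where S="{0<..}"]) (use 1 in \<open>auto simp: max_def\<close>)
  next
    case 2
    have "((\<lambda>x::real. 0) has_real_derivative 2 * max 0 x) (at x)" using 2 by simp
    then show ?thesis
      by (rule has_field_derivative_transform_within_open[where S="{..<0}"]) (use 2 in \<open>auto simp: max_def\<close>)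
  next
    case 3
    have "((\<lambda>y. ((max 0 y)\<^sup>2 - (max 0 0)\<^sup>2) / (y - 0)) \<longlongrightarrow> 0) (at (0::real))"
    proof (rule Lim_null_comparison[where g="\<lambda>y. \<bar>y\<bar>"])
      show "\<forall>\<^sub>F y in at 0. norm (((max 0 y)\<^sup>2 - (max 0 0)\<^sup>2) / (y - 0)) \<le> \<bar>y\<bar>"
        by (auto simp: power2_eq_square abs_mult max_def divide_simps)
      show "((\<lambda>y. \<bar>y\<bar>) \<longlongrightarrow> 0) (at (0::real))"
        using tendsto_rabs[OF tendsto_ident_at[of 0 UNIV]] by simp
    qed
    then show ?thesis using 3 by (simp add: has_field_derivative_iff)
  qed
qed

locale consensus =
  fixes I :: "'a set" and S :: "'a \<Rightarrow> 'b set" and \<tau> :: "'a \<Rightarrow> 'b \<Rightarrow> 'a"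
    and b :: "'a \<Rightarrow> 'b \<Rightarrow> real" and y :: "'a \<Rightarrow> real \<Rightarrow> real"
  assumes finI: "finite I" and finS: "\<And>i. i \<in> I \<Longrightarrow> finite (S i)"
    and tau: "\<And>i s. i \<in> I \<Longrightarrow> s \<in> S i \<Longrightarrow> \<tau> i s \<in> I"
    and bpos: "\<And>i s. i \<in> I \<Longrightarrow> s \<in> S i \<Longrightarrow> b i s > 0"
    and der: "\<And>i t. i \<in> I \<Longrightarrow> t \<ge> 0 \<Longrightarrow>
       (y i has_real_derivative (\<Sum>s\<in>S i. b i s * (y (\<tau> i s) t - y i t))) (at t within {0..})"
begin

lemma neg: "consensus I S \<tau> b (\<lambda>i t. - y i t)"
proof
  fix i t assume "i \<in> I" "0 \<le> (t::real)"
  from DERIV_minus[OF der[OF this]]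
  show "((\<lambda>t. - y i t) has_real_derivative (\<Sum>s\<in>S i. b i s * (- y (\<tau> i s) t - - y i t))) (at t within {0..})"
    by (simp add: sum_negf[symmetric] algebra_simps)
qed (auto simp: finI finS tau bpos)

lemma term_bound:
  fixes yi yt K :: real
  shows "max 0 (yi - K) * (yt - yi) \<le> max 0 (yi - K) * max 0 (yt - K)"
proof (cases "yi > K")
  case True
  then have "yt - yi \<le> max 0 (yt - K)" by simp
  then show ?thesis using True by (intro mult_left_mono) auto
qed simp

lemma upper_inv:
  assumes s: "0 \<le> s" and K: "\<And>i. i \<in> I \<Longrightarrow> y i s \<le> K" and st: "s \<le> t" and i: "i \<in> I"
  shows "y i t \<le> K"
proof -
  define u where "u i t = max 0 (y i t - K)" for i t
  define V where "V t = (\<Sum>i\<in>I. (u i t)\<^sup>2)" for t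
  define V' where "V' t = (\<Sum>i\<in>I. 2 * u i t * (\<Sum>s\<in>S i. b i s * (y (\<tau> i s) t - y i t)))" for t
  define C where "C = 2 * (\<Sum>i\<in>I. \<Sum>s\<in>S i. b i s)"
  have C0: "C \<ge> 0"
  proof -
    have "(\<Sum>s\<in>S j. b j s) \<ge> 0" if "j \<in> I" for j
      using bpos[OF that] by (simp add: less_imp_le sum_nonneg)
    then show ?thesis unfolding C_def by (simp add: sum_nonneg)
  qed
  have dV: "(V has_real_derivative V' t) (at t within {0..})" if "t \<ge> 0" for t
    unfolding V_def V'_def u_def
  proof (rule DERIV_sum)
    fix j assume "j \<in> I"
    from DERIV_chain2[OF pos2_deriv DERIV_diff[OF der[OF \<open>j \<in> I\<close> that] DERIV_const[of K]]]
    show "((\<lambda>x. (max 0 (y j x - K))\<^sup>2) has_real_derivative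
       2 * max 0 (y j t - K) * (\<Sum>s\<in>S j. b j s * (y (\<tau> j s) t - y j t))) (at t within {0..})"
      by simp
  qed
  have V0: "V t \<ge> 0" for t unfolding V_def by (auto intro!: sum_nonneg)
  have ule: "(u j t)\<^sup>2 \<le> V t" if "j \<in> I" for j t
    unfolding V_def using that finI by (intro member_le_sum) auto
  have uu: "u j t * u l t \<le> V t" if "j \<in> I" "l \<in> I" for j l t
  proof -
    have "u j t * u l t \<le> ((u j t)\<^sup>2 + (u l t)\<^sup>2) / 2"
      using sum_squares_bound[of "u j t" "u l t"] by (simp add: power2_eq_square field_simps)
    also have "\<dots> \<le> V t" using ule[OF that(1), of t] ule[OF that(2), of t] by simp
    finally show ?thesis .
  qed
  have V'le: "V' t \<le> C * V t" for t
  proof -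
    have "V' t = (\<Sum>i\<in>I. \<Sum>s\<in>S i. 2 * b i s * (u i t * (y (\<tau> i s) t - y i t)))"
      unfolding V'_def by (simp add: sum_distrib_left algebra_simps)
    also have "\<dots> \<le> (\<Sum>i\<in>I. \<Sum>s\<in>S i. 2 * b i s * V t)"
    proof (intro sum_mono)
      fix j s assume js: "j \<in> I" "s \<in> S j"
      have "u j t * (y (\<tau> j s) t - y j t) \<le> u j t * u (\<tau> j s) t"
        unfolding u_def by (rule term_bound)
      also have "\<dots> \<le> V t" by (rule uu[OF js(1) tau[OF js]])
      finally show "2 * b j s * (u j t * (y (\<tau> j s) t - y j t)) \<le> 2 * b j s * V t"
        using bpos[OF js] by (intro mult_left_mono) auto
    qed
    also have "\<dots> = C * V t" unfolding C_def by (simp add: sum_distrib_left sum_distrib_right algebra_simps)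
    finally show ?thesis .
  qed
  define h where "h t = - (exp (- C * t) * V t)" for t
  define h' where "h' t = - (exp (- C * t) * (V' t - C * V t))" for t
  have dh: "(h has_real_derivative h' t) (at t within {0..})" if "t \<ge> 0" for t
    unfolding h_def h'_def
    by (rule derivative_eq_intros dV[OF that] refl | simp add: algebra_simps)+
  have "h s \<le> h t"
  proof (rule mono_deriv[OF dh])
    fix x show "0 \<le> h' x" unfolding h'_def using V'le[of x] by (simp add: mult_nonneg_nonpos)
  qed (use s st in auto)
  moreover have "V s = 0" unfolding V_def u_def using K by (intro sum.neutral) (force simp: max_def)
  ultimately have "exp (- C * t) * V t \<le> 0" unfolding h_def by simp
  then have "V t \<le> 0" by (simp add: mult_le_0_iff)
  then have "V t = 0" using V0[of t] by simp
  then have "(u i t)\<^sup>2 = 0" using ule[OF i, of t] by (metis antisym zero_le_power2)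
  then show ?thesis unfolding u_def by (simp add: max_def split: if_splits)
qed

end

lemma compare:
  fixes f f' :: "real \<Rightarrow> real"
  assumes d: "\<And>t. t \<ge> 0 \<Longrightarrow> (f has_real_derivative f' t) (at t within {0..})"
    and ineq: "\<And>t. t0 \<le> t \<Longrightarrow> t \<le> t1 \<Longrightarrow> f' t \<ge> - B * f t + c"
    and B: "B > 0" and t0: "0 \<le> t0" "t0 \<le> t1"
  shows "f t1 - c / B \<ge> (f t0 - c / B) * exp (- B * (t1 - t0))"
proof -
  define h where "h t = exp (B * t) * (f t - c / B)" for t
  define h' where "h' t = exp (B * t) * (f' t + B * f t - c)" for t
  have dh: "(h has_real_derivative h' t) (at t within {0..})" if "t \<ge> 0" for t
  proof -
    have "(h has_real_derivative (B * exp (B * t)) * (f t - c / B) + f' t * exp (B * t)) (at t within {0..})"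
      unfolding h_def by (rule derivative_eq_intros d[OF that] refl | simp)+
    moreover have "(B * exp (B * t)) * (f t - c / B) + f' t * exp (B * t) = h' t"
      unfolding h'_def using B by (simp add: field_simps)
    ultimately show ?thesis by simp
  qed
  have "h t0 \<le> h t1"
  proof (rule mono_deriv[OF dh _ t0])
    fix t assume "t0 \<le> t" "t \<le> t1"
    then show "0 \<le> h' t" unfolding h'_def using ineq[of t] by simp
  qed
  then have "exp (- B * t1) * h t0 \<le> exp (- B * t1) * h t1" by simp
  moreover have "exp (- B * t1) * h t1 = f t1 - c / B"
    unfolding h_def by (simp add: exp_minus_inverse mult.assoc[symmetric] exp_add[symmetric])
  moreover have "exp (- B * t1) * h t0 = (f t0 - c / B) * exp (- B * (t1 - t0))"
    unfolding h_def by (simp add: exp_add[symmetric] algebra_simps)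
  ultimately show ?thesis by linarith
qed

context consensus begin

lemma lower_inv:
  assumes s: "0 \<le> s" and K: "\<And>i. i \<in> I \<Longrightarrow> K \<le> y i s" and st: "s \<le> t" and i: "i \<in> I"
  shows "K \<le> y i t"
  using consensus.upper_inv[OF neg s _ st i, of "-K"] K by force

fun rk :: "'a \<Rightarrow> nat \<Rightarrow> 'a \<Rightarrow> bool" where
  "rk r0 0 i = (i = r0)"
| "rk r0 (Suc n) i = (rk r0 n i \<or> (\<exists>s\<in>S i. rk r0 n (\<tau> i s)))"

lemma half:
  fixes B \<beta> :: real and N :: nat
  assumes B1: "B \<ge> 1" and BI: "\<And>i. i \<in> I \<Longrightarrow> (\<Sum>s\<in>S i. b i s) \<le> B"
    and \<beta>0: "\<beta> > 0" "\<beta> \<le> 1" and \<beta>b: "\<And>i s. i \<in> I \<Longrightarrow> s \<in> S i \<Longrightarrow> \<beta> \<le> b i s"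
    and r0: "r0 \<in> I" and s: "s \<ge> 0" and up: "\<And>i. i \<in> I \<Longrightarrow> y i s \<le> M"
    and root: "y r0 s \<le> M - d" and d: "d \<ge> 0"
  shows "i \<in> I \<Longrightarrow> rk r0 k i \<Longrightarrow> s + real k \<le> t \<Longrightarrow> t \<le> s + real N + 1 \<Longrightarrow>
     y i t \<le> M - exp (- B * (real N + 1)) * (\<beta> * (1 - exp (- B)) / B) ^ k * d"
proof (induction k arbitrary: i t)
  define q where "q = \<beta> * (1 - exp (- B)) / B"
  define E0 where "E0 = exp (- B * (real N + 1))"
  have B0: "B > 0" using B1 by simp
  have q0: "q \<ge> 0" unfolding q_def using \<beta>0 B1 by simp
  have q1: "q \<le> 1"
  proof -
    have "\<beta> * (1 - exp (- B)) \<le> 1 * 1" using \<beta>0 B1 by (intro mult_mono) auto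
    also have "\<dots> \<le> B" using B1 by simp
    finally show ?thesis unfolding q_def using B0 by simp
  qed
  have upT: "y j x \<le> M" if "j \<in> I" "s \<le> x" for j x
    by (rule upper_inv[OF s up _ that(1)]) (use that in auto)
  have fder: "((\<lambda>t. M - y j t) has_real_derivative - (\<Sum>s\<in>S j. b j s * (y (\<tau> j s) x - y j x))) (at x within {0..})"
    if "j \<in> I" "0 \<le> x" for j x
    using DERIV_diff[OF DERIV_const der[OF that]] by simp
  have sumle: "(\<Sum>s\<in>S j. b j s * (y (\<tau> j s) x - y j x)) \<le> B * (M - y j x)" if "j \<in> I" "s \<le> x" for j x
  proof -
    have "(\<Sum>s\<in>S j. b j s * (y (\<tau> j s) x - y j x)) \<le> (\<Sum>s\<in>S j. b j s * (M - y j x))"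
      using upT[OF tau[OF that(1)] that(2)] bpos[OF that(1)] by (intro sum_mono mult_left_mono) (auto simp: less_imp_le)
    also have "\<dots> = (\<Sum>s\<in>S j. b j s) * (M - y j x)" by (simp add: sum_distrib_right)
    also have "\<dots> \<le> B * (M - y j x)" using BI[OF that(1)] upT[OF that] by (intro mult_right_mono) auto
    finally show ?thesis .
  qed
  {
    case 0
    then have i: "i = r0" by simp
    have "M - y r0 t - 0 / B \<ge> (M - y r0 s - 0 / B) * exp (- B * (t - s))"
    proof (rule compare[OF fder[OF r0]])
      fix x assume "s \<le> x" "x \<le> t"
      then show "- (\<Sum>s\<in>S r0. b r0 s * (y (\<tau> r0 s) x - y r0 x)) \<ge> - B * (M - y r0 x) + 0"
        using sumle[OF r0, of x] by simp
    qed (use B0 s 0 in auto)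
    moreover have "(M - y r0 s) * exp (- B * (t - s)) \<ge> d * E0"
      unfolding E0_def using root d 0 B0 by (intro mult_mono) auto
    ultimately show ?case using i unfolding E0_def by (simp add: mult.commute)
  next
    case (Suc k)
    from Suc.prems(2) consider "rk r0 k i" | s0 where "s0 \<in> S i" "rk r0 k (\<tau> i s0)" by auto
    then show ?case
    proof cases
      case 1
      have "y i t \<le> M - E0 * q ^ k * d" unfolding E0_def q_def
        by (rule Suc.IH[OF Suc.prems(1) 1]) (use Suc.prems in auto)
      moreover have "E0 * q ^ Suc k * d \<le> E0 * q ^ k * d"
        unfolding E0_def using q0 q1 d by (intro mult_right_mono mult_left_mono power_decreasing) auto
      ultimately show ?thesis unfolding E0_def q_def by simp
    next
      case 2
      note i = Suc.prems(1)
      define j where "j = \<tau> i s0"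
      have j: "j \<in> I" unfolding j_def using tau[OF i 2(1)] .
      define D where "D = E0 * q ^ k * d"
      have D0: "D \<ge> 0" unfolding D_def E0_def using q0 d by simp
      have yj: "y j x \<le> M - D" if "s + real k \<le> x" "x \<le> s + real N + 1" for x
        unfolding D_def E0_def q_def j_def by (rule Suc.IH[OF tau[OF i 2(1)] 2(2) that])
      define c where "c = \<beta> * D"
      have "M - y i t - c / B \<ge> (M - y i (s + real k) - c / B) * exp (- B * (t - (s + real k)))"
      proof (rule compare[OF fder[OF i]])
        fix x assume x: "s + real k \<le> x" "x \<le> t"
        have "(\<Sum>s\<in>S i. b i s * (y (\<tau> i s) x - y i x))
            \<le> (\<Sum>s\<in>S i. b i s * (M - y i x) - (if s = s0 then b i s * D else 0))"
        proof (rule sum_mono)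
          fix s' assume s': "s' \<in> S i"
          show "b i s' * (y (\<tau> i s') x - y i x) \<le> b i s' * (M - y i x) - (if s' = s0 then b i s' * D else 0)"
          proof (cases "s' = s0")
            case True
            have "y (\<tau> i s') x - y i x \<le> M - y i x - D" using yj[of x] x Suc.prems True j_def by simp
            then show ?thesis using True bpos[OF i s'] by (simp add: right_diff_distrib[symmetric])
          next
            case False
            have "y (\<tau> i s') x \<le> M" using upT[OF tau[OF i s'], of x] x by simp
            then show ?thesis using False bpos[OF i s'] by (simp add: mult_left_mono)
          qed
        qed
        also have "\<dots> = (\<Sum>s\<in>S i. b i s) * (M - y i x) - b i s0 * D"
          using 2(1) finS[OF i] by (simp add: sum_subtractf sum_distrib_right)
        also have "\<dots> \<le> B * (M - y i x) - \<beta> * D"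
          using BI[OF i] upT[OF i, of x] x \<beta>b[OF i 2(1)] D0
          by (intro diff_mono mult_right_mono) auto
        finally show "- (\<Sum>s\<in>S i. b i s * (y (\<tau> i s) x - y i x)) \<ge> - B * (M - y i x) + c"
          unfolding c_def by simp
      qed (use B0 s Suc.prems in auto)
      moreover have "(M - y i (s + real k) - c / B) * exp (- B * (t - (s + real k))) \<ge> - (c / B) * exp (- B)"
      proof -
        have "M - y i (s + real k) \<ge> 0" using upT[OF i] s by simp
        then have "(M - y i (s + real k) - c / B) \<ge> - (c / B)" by simp
        moreover have "c / B \<ge> 0" unfolding c_def using \<beta>0 D0 B0 by simp
        moreover have "exp (- B * (t - (s + real k))) \<le> exp (- B)" using Suc.prems B0 by simp
        ultimately show ?thesis
          by (smt (verit, ccfv_SIG) exp_gt_zero mult_left_mono mult_minus_left mult_right_mono)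
      qed
      ultimately have "M - y i t \<ge> c / B * (1 - exp (- B))" by (simp add: algebra_simps)
      moreover have "c / B * (1 - exp (- B)) = E0 * q ^ Suc k * d"
        unfolding c_def D_def q_def using B0 by (simp add: field_simps)
      ultimately have "y i t \<le> M - E0 * q ^ Suc k * d" by linarith
      then show ?thesis by (simp only: E0_def q_def)
    qed
  }
qed

end

context consensus begin

lemma rk_mono: "rk r0 n i \<Longrightarrow> n \<le> m \<Longrightarrow> rk r0 m i"
  by (induction m) (auto simp: le_Suc_eq)

lemma step:
  fixes B \<beta> :: real and N :: nat
  assumes B1: "B \<ge> 1" and BI: "\<And>i. i \<in> I \<Longrightarrow> (\<Sum>s\<in>S i. b i s) \<le> B"
    and \<beta>0: "\<beta> > 0" "\<beta> \<le> 1" and \<beta>b: "\<And>i s. i \<in> I \<Longrightarrow> s \<in> S i \<Longrightarrow> \<beta> \<le> b i s"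
    and r0: "r0 \<in> I" and N: "\<And>i. i \<in> I \<Longrightarrow> rk r0 N i"
    and s: "s \<ge> 0" and bd: "\<And>i. i \<in> I \<Longrightarrow> m \<le> y i s \<and> y i s \<le> M"
  shows "\<exists>m' M'. M' - m' \<le> (1 - exp (- B * (real N + 1)) * (\<beta> * (1 - exp (- B)) / B) ^ N / 2) * (M - m)
     \<and> (\<forall>t \<ge> s + real N + 1. \<forall>i\<in>I. m' \<le> y i t \<and> y i t \<le> M')"
proof -
  define \<delta> where "\<delta> = exp (- B * (real N + 1)) * (\<beta> * (1 - exp (- B)) / B) ^ N"
  define \<Delta> where "\<Delta> = M - m"
  have \<Delta>0: "\<Delta> \<ge> 0" using bd[OF r0] unfolding \<Delta>_def by simp
  have lowT: "m \<le> y i t" if "i \<in> I" "s \<le> t" for i t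
    by (rule lower_inv[OF s _ that(2,1)]) (use bd in auto)
  have upT: "y i t \<le> M" if "i \<in> I" "s \<le> t" for i t
    by (rule upper_inv[OF s _ that(2,1)]) (use bd in auto)
  show ?thesis
  proof (cases "y r0 s \<le> M - \<Delta> / 2")
    case True
    have h: "y i (s + real N + 1) \<le> M - \<delta> * (\<Delta> / 2)" if "i \<in> I" for i
      using half[OF B1 BI \<beta>0 \<beta>b r0 s _ True _ that N[OF that]] bd \<Delta>0 unfolding \<delta>_def
      by (simp add: mult.assoc)
    have "\<forall>t \<ge> s + real N + 1. \<forall>i\<in>I. m \<le> y i t \<and> y i t \<le> M - \<delta> * (\<Delta> / 2)"
    proof (intro allI impI ballI conjI)
      fix t i assume "s + real N + 1 \<le> t" "i \<in> I"
      then show "m \<le> y i t" using lowT by simp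
      show "y i t \<le> M - \<delta> * (\<Delta> / 2)"
        by (rule upper_inv[OF _ h \<open>s + real N + 1 \<le> t\<close> \<open>i \<in> I\<close>]) (use s in auto)
    qed
    moreover have "M - \<delta> * (\<Delta> / 2) - m \<le> (1 - \<delta> / 2) * (M - m)" unfolding \<Delta>_def by (simp add: algebra_simps)
    ultimately show ?thesis unfolding \<delta>_def by blast
  next
    case False
    then have F: "- y r0 s \<le> - m - \<Delta> / 2" unfolding \<Delta>_def by (simp add: field_simps)
    have h: "- y i (s + real N + 1) \<le> - m - \<delta> * (\<Delta> / 2)" if "i \<in> I" for i
      using consensus.half[OF neg B1 BI \<beta>0 \<beta>b r0 s _ F _ that N[OF that]] bd \<Delta>0 unfolding \<delta>_def
      by (simp add: mult.assoc)
    have "\<forall>t \<ge> s + real N + 1. \<forall>i\<in>I. m + \<delta> * (\<Delta> / 2) \<le> y i t \<and> y i t \<le> M"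
    proof (intro allI impI ballI conjI)
      fix t i assume "s + real N + 1 \<le> t" "i \<in> I"
      then show "y i t \<le> M" using upT by simp
      show "m + \<delta> * (\<Delta> / 2) \<le> y i t"
        by (rule lower_inv[OF _ _ \<open>s + real N + 1 \<le> t\<close> \<open>i \<in> I\<close>]) (use s h in force)+
    qed
    moreover have "M - (m + \<delta> * (\<Delta> / 2)) \<le> (1 - \<delta> / 2) * (M - m)" unfolding \<Delta>_def by (simp add: algebra_simps)
    ultimately show ?thesis unfolding \<delta>_def by blast
  qed
qed

end

lemma exp_bound_floor:
  fixes \<gamma> T t D :: real
  assumes g: "0 < \<gamma>" "\<gamma> < 1" and T: "T > 0" and t: "t \<ge> 0" and D: "D \<ge> 0"
  shows "\<gamma> ^ nat \<lfloor>t / T\<rfloor> * D \<le> (D / \<gamma>) * exp (- (- ln \<gamma> / T) * t)"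
proof -
  define n where "n = nat \<lfloor>t / T\<rfloor>"
  have "real n \<ge> t / T - 1" unfolding n_def using t T by linarith
  moreover have "ln \<gamma> < 0" using g by simp
  ultimately have "real n * ln \<gamma> \<le> (t / T - 1) * ln \<gamma>" by (intro mult_right_mono_neg) auto
  then have "exp (real n * ln \<gamma>) \<le> exp ((t / T - 1) * ln \<gamma>)" by simp
  moreover have "exp (real n * ln \<gamma>) = \<gamma> ^ n" using g by (simp add: exp_of_nat_mult)
  moreover have "exp ((t / T - 1) * ln \<gamma>) = exp (- (- ln \<gamma> / T) * t) / \<gamma>"
    using g T by (simp add: algebra_simps exp_diff)
  ultimately have "\<gamma> ^ n \<le> exp (- (- ln \<gamma> / T) * t) / \<gamma>" by simp
  then have "\<gamma> ^ n * D \<le> exp (- (- ln \<gamma> / T) * t) / \<gamma> * D" using D by (rule mult_right_mono)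
  then show ?thesis unfolding n_def by (simp add: field_simps)
qed

context consensus begin

theorem converge:
  assumes r0: "r0 \<in> I" and reach: "\<And>i. i \<in> I \<Longrightarrow> \<exists>n. rk r0 n i"
  shows "\<exists>L C c. c > 0 \<and> (\<forall>i\<in>I. \<forall>t\<ge>0. \<bar>y i t - L\<bar> \<le> C * exp (- c * t))"
proof -
  define B where "B = 1 + (\<Sum>i\<in>I. \<Sum>s\<in>S i. b i s)"
  have Bsum: "(\<Sum>s\<in>S i. b i s) \<ge> 0" if "i \<in> I" for i
    using bpos[OF that] by (simp add: less_imp_le sum_nonneg)
  have B1: "B \<ge> 1" unfolding B_def using Bsum by (simp add: sum_nonneg)
  have BI: "(\<Sum>s\<in>S i. b i s) \<le> B" if "i \<in> I" for i
  proof -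
    have "(\<Sum>s\<in>S i. b i s) \<le> (\<Sum>i\<in>I. \<Sum>s\<in>S i. b i s)"
      using that finI Bsum by (intro member_le_sum) auto
    then show ?thesis unfolding B_def by simp
  qed
  define W where "W = (\<Union>i\<in>I. b i ` S i)"
  have finW: "finite W" unfolding W_def using finI finS by auto
  define \<beta> where "\<beta> = Min (insert 1 W)"
  have \<beta>1: "\<beta> \<le> 1" unfolding \<beta>_def using finW by simp
  have \<beta>0: "\<beta> > 0" unfolding \<beta>_def using finW bpos by (auto simp: W_def)
  have \<beta>b: "\<beta> \<le> b i s" if "i \<in> I" "s \<in> S i" for i s
    unfolding \<beta>_def using finW that by (intro Min_le) (auto simp: W_def)
  obtain nf where nf: "\<And>i. i \<in> I \<Longrightarrow> rk r0 (nf i) i" using reach by metis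
  define N where "N = Max (nf ` I)"
  have N: "rk r0 N i" if "i \<in> I" for i
    using rk_mono[OF nf[OF that]] finI that unfolding N_def by simp
  define \<delta> where "\<delta> = exp (- B * (real N + 1)) * (\<beta> * (1 - exp (- B)) / B) ^ N"
  define \<gamma> where "\<gamma> = 1 - \<delta> / 2"
  define T where "T = real N + 1"
  have T0: "T > 0" unfolding T_def by simp
  have q0: "\<beta> * (1 - exp (- B)) / B > 0" using \<beta>0 B1 by simp
  have q1: "\<beta> * (1 - exp (- B)) / B \<le> 1"
  proof -
    have "\<beta> * (1 - exp (- B)) \<le> 1 * 1" using \<beta>0 \<beta>1 B1 by (intro mult_mono) auto
    also have "\<dots> \<le> B" using B1 by simp
    finally show ?thesis using B1 by simp
  qed
  have \<delta>0: "\<delta> > 0" unfolding \<delta>_def using q0 by simp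
  have \<delta>1: "\<delta> \<le> 1" unfolding \<delta>_def using q0 q1 B1
    by (intro mult_le_one) (auto simp: power_le_one)
  have g0: "\<gamma> > 0" "\<gamma> < 1" unfolding \<gamma>_def using \<delta>0 \<delta>1 by auto
  have stp: "\<exists>m' M'. M' - m' \<le> \<gamma> * (M - m) \<and> (\<forall>t \<ge> s + T. \<forall>i\<in>I. m' \<le> y i t \<and> y i t \<le> M')"
    if "s \<ge> 0" "\<And>i. i \<in> I \<Longrightarrow> m \<le> y i s \<and> y i s \<le> M" for s m M
    using step[OF B1 BI \<beta>0 \<beta>1 \<beta>b r0 N that] unfolding \<gamma>_def \<delta>_def T_def
    by (simp add: add.assoc)
  define m0 where "m0 = Min ((\<lambda>i. y i 0) ` I)"
  define M0 where "M0 = Max ((\<lambda>i. y i 0) ` I)"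
  have bd0: "m0 \<le> y i 0 \<and> y i 0 \<le> M0" if "i \<in> I" for i
    unfolding m0_def M0_def using finI that by auto
  have I0: "I \<noteq> {}" using r0 by auto
  have P: "\<exists>m M. M - m \<le> \<gamma> ^ n * (M0 - m0) \<and> (\<forall>t \<ge> real n * T. \<forall>i\<in>I. m \<le> y i t \<and> y i t \<le> M)" for n
  proof (induction n)
    case 0
    show ?case
    proof (intro exI conjI allI impI ballI)
      fix t i assume "real 0 * T \<le> t" "i \<in> I"
      then show "m0 \<le> y i t" "y i t \<le> M0"
        using lower_inv[of 0 m0 t i] upper_inv[of 0 M0 t i] bd0 by auto
    qed simp
  next
    case (Suc n)
    then obtain m M where mM: "M - m \<le> \<gamma> ^ n * (M0 - m0)"
      "\<And>t i. real n * T \<le> t \<Longrightarrow> i \<in> I \<Longrightarrow> m \<le> y i t \<and> y i t \<le> M" by blast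
    have "real n * T \<ge> 0" using T0 by simp
    from stp[OF this mM(2)] obtain m' M' where
      m'M': "M' - m' \<le> \<gamma> * (M - m)" "\<forall>t \<ge> real n * T + T. \<forall>i\<in>I. m' \<le> y i t \<and> y i t \<le> M'" by blast
    have "\<gamma> * (M - m) \<le> \<gamma> * (\<gamma> ^ n * (M0 - m0))" using mM(1) g0 by (intro mult_left_mono) auto
    then have "M' - m' \<le> \<gamma> ^ Suc n * (M0 - m0)"
      using m'M'(1) by (simp add: mult.assoc)
    moreover have "real (Suc n) * T = real n * T + T" by (simp add: algebra_simps)
    ultimately show ?case using m'M'(2) by metis
  qed
  obtain mf Mf where mf: "\<And>n. Mf n - mf n \<le> \<gamma> ^ n * (M0 - m0)"
    "\<And>n t i. real n * T \<le> t \<Longrightarrow> i \<in> I \<Longrightarrow> mf n \<le> y i t \<and> y i t \<le> Mf n"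
    using P by metis
  define A where "A = {a. \<exists>n. \<forall>t \<ge> real n * T. \<forall>i\<in>I. a \<le> y i t}"
  define L where "L = Sup A"
  have Aub: "a \<le> Mf n" if aA: "a \<in> A" for a n
  proof -
    obtain n' where n': "\<forall>t \<ge> real n' * T. \<forall>i\<in>I. a \<le> y i t" using aA unfolding A_def by blast
    define t where "t = max (real n' * T) (real n * T)"
    have "a \<le> y r0 t" using n' r0 unfolding t_def by simp
    also have "\<dots> \<le> Mf n" using mf(2)[of n t r0] r0 unfolding t_def by simp
    finally show ?thesis .
  qed
  have mfA: "mf n \<in> A" for n unfolding A_def using mf(2) by blast
  have Lb: "mf n \<le> L \<and> L \<le> Mf n" for n
  proof
    show "mf n \<le> L" unfolding L_def
      by (rule cSup_upper[OF mfA]) (use Aub in \<open>auto simp: bdd_above_def\<close>)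
    show "L \<le> Mf n" unfolding L_def
      by (rule cSup_least) (use mfA Aub in auto)
  qed
  have D0: "M0 - m0 \<ge> 0" using bd0[OF r0] by simp
  show ?thesis
  proof (intro exI conjI ballI allI impI)
    show "- ln \<gamma> / T > 0" using g0 T0 by (simp add: divide_neg_pos)
    fix i t assume i: "i \<in> I" and t: "0 \<le> (t::real)"
    define n where "n = nat \<lfloor>t / T\<rfloor>"
    have "real n * T \<le> t" unfolding n_def using t T0
      by (metis floor_divide_lower le_nat_floor mult.commute nat_le_real_less of_nat_nat zero_le_floor zero_le_divide_iff less_imp_le)
    then have "\<bar>y i t - L\<bar> \<le> Mf n - mf n" using mf(2)[of n t i] i Lb[of n] by auto
    also have "\<dots> \<le> \<gamma> ^ n * (M0 - m0)" by (rule mf(1))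
    also have "\<dots> \<le> ((M0 - m0) / \<gamma>) * exp (- (- ln \<gamma> / T) * t)"
      unfolding n_def by (rule exp_bound_floor[OF g0 T0 t D0])
    finally show "\<bar>y i t - L\<bar> \<le> ((M0 - m0) / \<gamma>) * exp (- (- ln \<gamma> / T) * t)" .
  qed
qed

end

lemma orth_inv: "orthogonal_matrix (g::real^'k^'k) \<Longrightarrow> matrix_inv g = transpose g"
proof -
  assume o: "orthogonal_matrix g"
  then have ex: "\<exists>A'. g ** A' = mat 1 \<and> A' ** g = mat 1" unfolding orthogonal_matrix_def by blast
  define A where "A = matrix_inv g"
  have A: "g ** A = mat 1" "A ** g = mat 1" using someI_ex[OF ex] unfolding A_def matrix_inv_def by auto
  have "A = A ** (g ** transpose g)" using o by (simp add: orthogonal_matrix_def)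
  also have "\<dots> = transpose g" by (simp add: matrix_mul_assoc A)
  finally show ?thesis unfolding A_def .
qed

lemma orth_norm: "orthogonal_matrix (Q::real^'k^'k) \<Longrightarrow> norm (Q *v x) = norm x"
  by (metis orthogonal_transformation_matrix orthogonal_transformation_norm
      matrix_of_matrix_vector_mul matrix_vector_mul_linear)

lemma orth_lr: "orthogonal_matrix (Q::real^'k^'k) \<Longrightarrow> transpose Q ** Q = mat 1 \<and> Q ** transpose Q = mat 1"
  by (simp add: orthogonal_matrix_def)

lemma walk_semi: "walk_volt E \<rho> i j g \<Longrightarrow> semiwalk_volt E \<rho> i j g"
  by (induction rule: walk_volt.induct) (auto intro: semiwalk_volt.intros)

lemma semi_append: "semiwalk_volt E \<rho> j l h \<Longrightarrow> semiwalk_volt E \<rho> i j g \<Longrightarrow> semiwalk_volt E \<rho> i l (g ** h)"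
proof (induction rule: semiwalk_volt.induct)
  case (sw_nil i) then show ?case by simp
next
  case (sw_fwd i' j' g' l') then show ?case
    by (metis matrix_mul_assoc semiwalk_volt.sw_fwd)
next
  case (sw_bwd i' j' g' l') then show ?case
    by (metis matrix_mul_assoc semiwalk_volt.sw_bwd)
qed

lemma walk_append: "walk_volt E \<rho> j l h \<Longrightarrow> walk_volt E \<rho> i j g \<Longrightarrow> walk_volt E \<rho> i l (g ** h)"
proof (induction rule: walk_volt.induct)
  case (w_nil i) then show ?case by simp
next
  case (w_fwd i' j' g' l') then show ?case
    by (metis matrix_mul_assoc walk_volt.w_fwd)
qed

lemma walk_edge: "(i, j) \<in> E \<Longrightarrow> walk_volt E \<rho> i j (\<rho> (i, j))"
  using walk_volt.w_fwd[OF walk_volt.w_nil] by fastforce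

lemma semi_rev:
  assumes orth: "\<And>e. e \<in> E \<Longrightarrow> orthogonal_matrix (\<rho> e)"
  shows "semiwalk_volt E \<rho> i j g \<Longrightarrow> semiwalk_volt E \<rho> j i (transpose g)"
proof (induction rule: semiwalk_volt.induct)
  case (sw_nil i) then show ?case by (simp add: semiwalk_volt.sw_nil)
next
  case (sw_fwd i j g l)
  have "semiwalk_volt E \<rho> l j (mat 1 ** matrix_inv (\<rho> (j, l)))"
    by (rule semiwalk_volt.sw_bwd[OF semiwalk_volt.sw_nil sw_fwd(2)])
  then have "semiwalk_volt E \<rho> l j (transpose (\<rho> (j, l)))" using orth_inv[OF orth[OF sw_fwd(2)]] by simp
  from semi_append[OF sw_fwd(3) this] show ?case by (simp add: matrix_transpose_mul)
next
  case (sw_bwd i j g l)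
  have "semiwalk_volt E \<rho> l j (mat 1 ** \<rho> (l, j))"
    by (rule semiwalk_volt.sw_fwd[OF semiwalk_volt.sw_nil sw_bwd(2)])
  then have "semiwalk_volt E \<rho> l j (\<rho> (l, j))" by simp
  from semi_append[OF sw_bwd(3) this] show ?case
    using orth_inv[OF orth[OF sw_bwd(2)]] by (simp add: matrix_transpose_mul)
qed

lemma walk_inG:
  assumes pg: "point_group G" and rG: "\<And>e. e \<in> E \<Longrightarrow> \<rho> e \<in> G"
  shows "walk_volt E \<rho> i j g \<Longrightarrow> g \<in> G"
  by (induction rule: walk_volt.induct) (use pg rG in \<open>auto simp: point_group_def\<close>)

lemma path_walk:
  assumes "has_path E u w" shows "\<exists>g. walk_volt E \<rho> u w g"
proof -
  obtain vs where vs: "vs \<noteq> []" "hd vs = u" "last vs = w"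
    "\<forall>n. Suc n < length vs \<longrightarrow> (vs ! n, vs ! Suc n) \<in> E"
    using assms unfolding has_path_def by blast
  have "\<And>u. vs \<noteq> [] \<Longrightarrow> hd vs = u \<Longrightarrow> (\<forall>n. Suc n < length vs \<longrightarrow> (vs ! n, vs ! Suc n) \<in> E)
     \<Longrightarrow> \<exists>g. walk_volt E \<rho> u (last vs) g"
  proof (induction vs)
    case Nil then show ?case by simp
  next
    case (Cons x xs)
    show ?case
    proof (cases "xs = []")
      case True
      then have "last (x # xs) = u" using Cons.prems by simp
      then show ?thesis using walk_volt.w_nil[of E \<rho> u] by auto
    next
      case False
      have e: "(x, hd xs) \<in> E" using Cons.prems(3)[rule_format, of 0] False by (simp add: hd_conv_nth)
      have "\<forall>n. Suc n < length xs \<longrightarrow> (xs ! n, xs ! Suc n) \<in> E"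
        using Cons.prems(3) by (metis Suc_less_eq length_Cons nth_Cons_Suc)
      then obtain g where "walk_volt E \<rho> (hd xs) (last xs) g" using Cons.IH False by blast
      from walk_append[OF this walk_edge[OF e]] show ?thesis using Cons.prems False by auto
    qed
  qed
  then show ?thesis using vs by blast
qed

lemma combine:
  fixes f :: "'x \<Rightarrow> real \<Rightarrow> real^'k"
  assumes h: "\<And>c. \<exists>L C \<kappa>. \<kappa> > 0 \<and> (\<forall>x\<in>X. \<forall>t\<ge>0. \<bar>f x t $ c - L\<bar> \<le> C * exp (- \<kappa> * t))"
  shows "\<exists>z C \<kappa>. \<kappa> > 0 \<and> (\<forall>x\<in>X. \<forall>t\<ge>0. norm (f x t - z) \<le> C * exp (- \<kappa> * t))"
proof -
  obtain L C \<kappa> where LCk: "\<And>c. \<kappa> c > 0" "\<And>c x t. x \<in> X \<Longrightarrow> t \<ge> 0 \<Longrightarrow> \<bar>f x t $ c - L c\<bar> \<le> C c * exp (- \<kappa> c * t)"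
    using h by metis
  define km where "km = Min (range \<kappa>)"
  have km0: "km > 0" unfolding km_def using LCk(1) by simp
  have kmle: "km \<le> \<kappa> c" for c unfolding km_def by simp
  show ?thesis
  proof (intro exI conjI ballI allI impI)
    show "km > 0" by (rule km0)
    fix x t assume x: "x \<in> X" and t: "0 \<le> (t::real)"
    have "norm (f x t - (\<chi> c. L c)) \<le> (\<Sum>c\<in>UNIV. \<bar>(f x t - (\<chi> c. L c)) $ c\<bar>)" by (rule norm_le_l1_cart)
    also have "\<dots> \<le> (\<Sum>c\<in>UNIV. \<bar>C c\<bar> * exp (- km * t))"
    proof (rule sum_mono)
      fix c
      have "\<bar>(f x t - (\<chi> c. L c)) $ c\<bar> = \<bar>f x t $ c - L c\<bar>" by simp
      also have "\<dots> \<le> C c * exp (- \<kappa> c * t)" by (rule LCk(2)[OF x t])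
      also have "\<dots> \<le> \<bar>C c\<bar> * exp (- \<kappa> c * t)" by (intro mult_right_mono) auto
      also have "\<dots> \<le> \<bar>C c\<bar> * exp (- km * t)" using kmle[of c] t by (intro mult_left_mono) (auto simp: mult_right_mono)
      finally show "\<bar>(f x t - (\<chi> c. L c)) $ c\<bar> \<le> \<bar>C c\<bar> * exp (- km * t)" .
    qed
    also have "\<dots> = (\<Sum>c\<in>UNIV. \<bar>C c\<bar>) * exp (- km * t)" by (simp add: sum_distrib_right)
    finally show "norm (f x t - (\<chi> c. L c)) \<le> (\<Sum>c\<in>UNIV. \<bar>C c\<bar>) * exp (- km * t)" .
  qed
qed

lemma exp_zero_bound:
  fixes a C \<kappa> :: real
  assumes "\<kappa> > 0" "\<And>t. t \<ge> 0 \<Longrightarrow> a \<le> C * exp (- \<kappa> * t)"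
  shows "a \<le> 0"
proof -
  have "((\<lambda>t. C * exp (- \<kappa> * t)) \<longlongrightarrow> C * 0) at_top"
    using assms(1) by (intro tendsto_mult tendsto_const) real_asymp
  then have "a \<le> C * 0"
    by (rule tendsto_lowerbound) (use assms(2) in \<open>auto simp: eventually_at_top_linorder\<close>)
  then show ?thesis by simp
qed

lemma norm_le_sum_vec: "norm (x :: ('a::real_normed_vector)^'n) \<le> (\<Sum>i\<in>UNIV. norm (x $ i))"
  unfolding norm_vec_def by (rule L2_set_le_sum) simp

theorem theorem4:
  fixes E :: "('v::finite \<times> 'v) set"
    and G :: "(real^'k^'k) set"
    and \<rho> :: "'v \<times> 'v \<Rightarrow> real^'k^'k"
    and a :: "'v \<Rightarrow> 'v \<Rightarrow> real"
    and p :: "real \<Rightarrow> (real^'k)^'v"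
  assumes vg: "voltage_graph E G \<rho>"
    and rt: "rooted E"
    and apos: "\<And>i j. (i, j) \<in> E \<Longrightarrow> a i j > 0"
    and grp: "\<exists>r. is_root E r \<and> local_group E \<rho> r = dir_local_group E \<rho> r"
    and ode: "\<And>t. t \<ge> 0 \<Longrightarrow>
                (p has_vector_derivative clustering_field E \<rho> a (p t)) (at t within {0..})"
  shows "\<exists>pstar :: (real^'k)^'v.
           (\<exists>C c. c > 0 \<and> (\<forall>t\<ge>0. norm (p t - pstar) \<le> C * exp (- c * t)))
         \<and> (\<forall>i j. (i, j) \<in> E \<longrightarrow> pstar $ i = \<rho> (i, j) *v (pstar $ j))
         \<and> (\<forall>i j. norm (pstar $ i) = norm (pstar $ j))
         \<and> (\<forall>i. \<forall>\<theta>\<in>local_group E \<rho> i. \<theta> *v (pstar $ i) = pstar $ i)"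
proof -
  obtain r where root: "is_root E r" and geq: "local_group E \<rho> r = dir_local_group E \<rho> r"
    using grp by blast
  have pg: "point_group G" and rG: "\<And>e. e \<in> E \<Longrightarrow> \<rho> e \<in> G"
    using vg unfolding voltage_graph_def by auto
  have orthG: "\<And>g. g \<in> G \<Longrightarrow> orthogonal_matrix g" using pg unfolding point_group_def by auto
  have orth: "\<And>e. e \<in> E \<Longrightarrow> orthogonal_matrix (\<rho> e)" using orthG rG by blast
  have walkGG: "\<And>i j g. walk_volt E \<rho> i j g \<Longrightarrow> g \<in> G" by (rule walk_inG[OF pg rG])
  have walkG: "\<And>i j g. walk_volt E \<rho> i j g \<Longrightarrow> orthogonal_matrix g" using walkGG orthG by blast
  have walkr: "\<exists>w. walk_volt E \<rho> v r w" for v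
  proof -
    have "has_path E v r" using root unfolding is_root_def by blast
    then show ?thesis by (rule path_walk)
  qed
  have semi_walk_r: "walk_volt E \<rho> r r h" if "semiwalk_volt E \<rho> r r h" for h
  proof -
    have "h \<in> local_group E \<rho> r" using that by (simp add: local_group_def)
    then have "h \<in> dir_local_group E \<rho> r" using geq by simp
    then show ?thesis by (simp add: dir_local_group_def)
  qed
  have clos: "walk_volt E \<rho> v' r (transpose (\<rho> (v, v')) ** w)"
    if e: "(v, v') \<in> E" and w: "walk_volt E \<rho> v r w" for v v' w
  proof -
    obtain w2 where w2: "walk_volt E \<rho> v' r w2" using walkr by blast
    have ww: "walk_volt E \<rho> v r (\<rho> (v, v') ** w2)" using walk_append[OF w2 walk_edge[OF e]] .
    have "semiwalk_volt E \<rho> r v (transpose (\<rho> (v, v') ** w2))"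
      by (rule semi_rev[OF orth walk_semi[OF ww]])
    from semi_append[OF walk_semi[OF w] this]
    have "semiwalk_volt E \<rho> r r (transpose (\<rho> (v, v') ** w2) ** w)" .
    then have h: "walk_volt E \<rho> r r (transpose (\<rho> (v, v') ** w2) ** w)" by (rule semi_walk_r)
    from walk_append[OF h w2] have "walk_volt E \<rho> v' r (w2 ** (transpose (\<rho> (v, v') ** w2) ** w))" .
    moreover have "w2 ** (transpose (\<rho> (v, v') ** w2) ** w) = transpose (\<rho> (v, v')) ** w"
      using orth_lr[OF walkG[OF w2]] by (simp add: matrix_transpose_mul matrix_mul_assoc)
    ultimately show ?thesis by simp
  qed
  have loc: "walk_volt E \<rho> i r (\<theta> ** w)"
    if th: "\<theta> \<in> local_group E \<rho> i" and w: "walk_volt E \<rho> i r w" for i \<theta> w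
  proof -
    have s1: "semiwalk_volt E \<rho> i i \<theta>" using th unfolding local_group_def by simp
    have s2: "semiwalk_volt E \<rho> i r (\<theta> ** w)" by (rule semi_append[OF walk_semi[OF w] s1])
    have s3: "semiwalk_volt E \<rho> r i (transpose w)" by (rule semi_rev[OF orth walk_semi[OF w]])
    have "semiwalk_volt E \<rho> r r (transpose w ** (\<theta> ** w))" by (rule semi_append[OF s2 s3])
    then have h: "walk_volt E \<rho> r r (transpose w ** (\<theta> ** w))" by (rule semi_walk_r)
    from walk_append[OF h w] have "walk_volt E \<rho> i r (w ** (transpose w ** (\<theta> ** w)))" .
    moreover have "w ** (transpose w ** (\<theta> ** w)) = \<theta> ** w"
      using orth_lr[OF walkG[OF w]] by (simp add: matrix_mul_assoc)
    ultimately show ?thesis by simp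
  qed
  define I where "I = {x. walk_volt E \<rho> (fst x) r (snd x)}"
  have finI: "finite I"
  proof (rule finite_subset)
    show "I \<subseteq> UNIV \<times> G" unfolding I_def using walkGG by auto
    show "finite ((UNIV :: 'v set) \<times> G)" using pg unfolding point_group_def by (intro finite_cartesian_product) auto
  qed
  define S where "S x = {v'. (fst x, v') \<in> E}" for x :: "'v \<times> (real^'k^'k)"
  define \<tau> where "\<tau> x v' = (v', transpose (\<rho> (fst x, v')) ** snd x)" for x :: "'v \<times> (real^'k^'k)" and v'
  define bb where "bb x v' = a (fst x) v'" for x :: "'v \<times> (real^'k^'k)" and v'
  define f where "f x t = transpose (snd x) *v (p t $ fst x)" for x :: "'v \<times> (real^'k^'k)" and t
  define r0 where "r0 = (r, mat 1 :: real^'k^'k)"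
  have coord: "\<exists>L C \<kappa>. \<kappa> > 0 \<and> (\<forall>x\<in>I. \<forall>t\<ge>0. \<bar>f x t $ c - L\<bar> \<le> C * exp (- \<kappa> * t))" for c
  proof -
    interpret cs: consensus I S \<tau> bb "\<lambda>x t. f x t $ c"
    proof
      show "finite I" by (rule finI)
      fix x assume x: "x \<in> I"
      show "finite (S x)" unfolding S_def by simp
      fix s assume s: "s \<in> S x"
      show "\<tau> x s \<in> I" using clos[of "fst x" s "snd x"] x s unfolding I_def S_def \<tau>_def by simp
      show "bb x s > 0" using apos s unfolding bb_def S_def by simp
    next
      fix x t assume x: "x \<in> I" and t: "0 \<le> (t::real)"
      define lin where "lin q = (transpose (snd x) *v (q $ fst x)) $ c" for q :: "(real^'k)^'v"
      have bl: "bounded_linear lin" unfolding lin_def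
        by (intro bounded_linear_compose[OF bounded_linear_vec_nth]
            bounded_linear_compose[OF matrix_vector_mul_bounded_linear] bounded_linear_vec_nth)
      have "((\<lambda>t. lin (p t)) has_vector_derivative lin (clustering_field E \<rho> a (p t))) (at t within {0..})"
        by (rule bounded_linear.has_vector_derivative[OF bl ode[OF t]])
      moreover have "lin (clustering_field E \<rho> a (p t)) =
          (\<Sum>s\<in>S x. bb x s * (f (\<tau> x s) t $ c - f x t $ c))"
      proof -
        have "lin (clustering_field E \<rho> a (p t)) =
            (\<Sum>j\<in>{j. (fst x, j) \<in> E}. (transpose (snd x) *v (a (fst x) j *\<^sub>R (\<rho> (fst x, j) *v (p t $ j) - p t $ fst x))) $ c)"
          unfolding lin_def clustering_field_def
          by (simp add: linear_sum[OF matrix_vector_mul_linear] o_def)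
        also have "\<dots> = (\<Sum>s\<in>S x. bb x s * (f (\<tau> x s) t $ c - f x t $ c))"
          unfolding S_def
        proof (rule sum.cong[OF refl])
          fix j
          have "transpose (snd x) *v (\<rho> (fst x, j) *v (p t $ j)) = transpose (transpose (\<rho> (fst x, j)) ** snd x) *v (p t $ j)"
            by (simp only: matrix_vector_mul_assoc matrix_transpose_mul transpose_transpose)
          then show "(transpose (snd x) *v (a (fst x) j *\<^sub>R (\<rho> (fst x, j) *v (p t $ j) - p t $ fst x))) $ c =
              bb x j * (f (\<tau> x j) t $ c - f x t $ c)"
            unfolding bb_def f_def \<tau>_def
            by (simp only: matrix_vector_mult_scaleR matrix_vector_mult_diff_distrib vector_scaleR_component
                vector_minus_component fst_conv snd_conv real_scaleR_def)
        qed
        finally show ?thesis .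
      qed
      ultimately show "((\<lambda>t. f x t $ c) has_real_derivative (\<Sum>s\<in>S x. bb x s * (f (\<tau> x s) t $ c - f x t $ c))) (at t within {0..})"
        unfolding has_real_derivative_iff_has_vector_derivative lin_def f_def by simp
    qed
    have r0I: "r0 \<in> I" unfolding r0_def I_def by (simp add: walk_volt.w_nil)
    have reachw: "walk_volt E \<rho> i j g \<Longrightarrow> \<forall>w n. cs.rk r0 n (j, transpose g ** w) \<longrightarrow> (\<exists>m. cs.rk r0 m (i, w))"
      for i j g
    proof (induction rule: walk_volt.induct)
      case (w_nil i) then show ?case by auto
    next
      case (w_fwd i j g l)
      show ?case
      proof (intro allI impI)
        fix w n assume "cs.rk r0 n (l, transpose (g ** \<rho> (j, l)) ** w)"
        then have "cs.rk r0 n (\<tau> (j, transpose g ** w) l)"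
          unfolding \<tau>_def by (simp add: matrix_transpose_mul matrix_mul_assoc)
        then have "cs.rk r0 (Suc n) (j, transpose g ** w)"
          unfolding cs.rk.simps(2)
        proof (intro disjI2 bexI)
          show "l \<in> S (j, transpose g ** w)" using w_fwd(2) unfolding S_def by simp
        qed
        then show "\<exists>m. cs.rk r0 m (i, w)" using w_fwd(3) by blast
      qed
    qed
    have reach: "\<exists>n. cs.rk r0 n x" if "x \<in> I" for x
    proof -
      have w: "walk_volt E \<rho> (fst x) r (snd x)" using that unfolding I_def by simp
      have "cs.rk r0 0 (r, transpose (snd x) ** snd x)"
        using orth_lr[OF walkG[OF w]] unfolding r0_def by simp
      then show ?thesis using reachw[OF w] by (metis prod.collapse)
    qed
    show ?thesis by (rule cs.converge[OF r0I reach])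
  qed
  from combine[OF coord] obtain z C \<kappa> where zC: "\<kappa> > 0"
    "\<And>x t. x \<in> I \<Longrightarrow> t \<ge> 0 \<Longrightarrow> norm (f x t - z) \<le> C * exp (- \<kappa> * t)" by blast
  have dist: "norm (p t $ v - w *v z) \<le> C * exp (- \<kappa> * t)"
    if w: "walk_volt E \<rho> v r w" and t: "t \<ge> 0" for v w t
  proof -
    have o: "orthogonal_matrix w" by (rule walkG[OF w])
    have "w *v (f (v, w) t) = (w ** transpose w) *v (p t $ v)"
      unfolding f_def by (simp only: matrix_vector_mul_assoc fst_conv snd_conv)
    also have "\<dots> = p t $ v" using orth_lr[OF o] by simp
    finally have "p t $ v - w *v z = w *v (f (v, w) t - z)"
      by (simp add: matrix_vector_mult_diff_distrib)
    then have "norm (p t $ v - w *v z) = norm (f (v, w) t - z)" using orth_norm[OF o] by simp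
    also have "\<dots> \<le> C * exp (- \<kappa> * t)" using zC(2)[of "(v, w)" t] w t unfolding I_def by simp
    finally show ?thesis .
  qed
  have uniq: "w *v z = w' *v z" if w: "walk_volt E \<rho> v r w" and w': "walk_volt E \<rho> v r w'" for v w w'
  proof -
    have "norm (w *v z - w' *v z) \<le> 0"
    proof (rule exp_zero_bound[OF zC(1)])
      fix t :: real assume t: "t \<ge> 0"
      have "w *v z - w' *v z = (p t $ v - w' *v z) - (p t $ v - w *v z)" by simp
      then have "norm (w *v z - w' *v z) \<le> norm (p t $ v - w' *v z) + norm (p t $ v - w *v z)"
        using norm_triangle_ineq4 by metis
      then have "norm (w *v z - w' *v z) \<le> norm (p t $ v - w *v z) + norm (p t $ v - w' *v z)"
        by simp
      also have "\<dots> \<le> (2 * C) * exp (- \<kappa> * t)" using dist[OF w t] dist[OF w' t] by simp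
      finally show "norm (w *v z - w' *v z) \<le> (2 * C) * exp (- \<kappa> * t)" .
    qed
    then show ?thesis by simp
  qed
  define wv where "wv v = (SOME w. walk_volt E \<rho> v r w)" for v
  have wv: "walk_volt E \<rho> v r (wv v)" for v unfolding wv_def by (rule someI_ex[OF walkr])
  define pstar where "pstar = (\<chi> v. wv v *v z)"
  have ps: "pstar $ v = w *v z" if "walk_volt E \<rho> v r w" for v w
    unfolding pstar_def using uniq[OF wv that] by simp
  show ?thesis
  proof (intro exI conjI allI impI ballI)
    show "\<kappa> > 0" by (rule zC(1))
    fix t :: real assume t: "t \<ge> 0"
    have "norm (p t - pstar) \<le> (\<Sum>v\<in>UNIV. norm ((p t - pstar) $ v))" by (rule norm_le_sum_vec)
    also have "\<dots> \<le> (\<Sum>v\<in>(UNIV::'v set). C * exp (- \<kappa> * t))"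
    proof (rule sum_mono)
      fix v
      show "norm ((p t - pstar) $ v) \<le> C * exp (- \<kappa> * t)"
        using dist[OF wv t, of v] by (simp add: pstar_def)
    qed
    also have "\<dots> = (real CARD('v) * C) * exp (- \<kappa> * t)" by simp
    finally show "norm (p t - pstar) \<le> (real CARD('v) * C) * exp (- \<kappa> * t)" .
  next
    fix i j assume e: "(i, j) \<in> E"
    have "pstar $ j = (transpose (\<rho> (i, j)) ** wv i) *v z" by (rule ps[OF clos[OF e wv]])
    then have "\<rho> (i, j) *v (pstar $ j) = (\<rho> (i, j) ** transpose (\<rho> (i, j)) ** wv i) *v z"
      by (simp add: matrix_vector_mul_assoc matrix_mul_assoc)
    also have "\<dots> = pstar $ i" using orth_lr[OF orth[OF e]] ps[OF wv] by simp
    finally show "pstar $ i = \<rho> (i, j) *v (pstar $ j)" by simp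
  next
    fix i j
    show "norm (pstar $ i) = norm (pstar $ j)"
      using ps[OF wv] orth_norm[OF walkG[OF wv]] by simp
  next
    fix i \<theta> assume th: "\<theta> \<in> local_group E \<rho> i"
    have e1: "pstar $ i = (\<theta> ** wv i) *v z" by (rule ps[OF loc[OF th wv]])
    have e2: "pstar $ i = wv i *v z" by (rule ps[OF wv])
    have "\<theta> *v (pstar $ i) = \<theta> *v (wv i *v z)" by (simp only: e2)
    also have "\<dots> = (\<theta> ** wv i) *v z" by (simp only: matrix_vector_mul_assoc)
    finally show "\<theta> *v (pstar $ i) = pstar $ i" using e1 by simp
  qed
qed

end
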